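(* Let $n\ge2$, let $\gamma:I\to S^n$ be a spherical unit speed curve and let $P\in S^n$ with $P\neq\pm\mathbf{u}_n(s)$ for all $s\in I$. Then for $s\in I$: $ort_{\gamma,P}'(s)=\mathbf{0}$ if and only if either $ped_{\gamma,P}'(s)=\mathbf{0}$ or $ped_{\gamma,P}(s)$ is a singular point of $\Phi_P$.
   Context: $I\subset\mathbb{R}$ is an open interval and $S^n$ the unit sphere in $\mathbb{R}^{n+1}$; the dot denotes the Euclidean inner product. A regular curve $\gamma:I\to S^n$ is a spherical unit speed curve if, setting $\mathbf{u}_{-1}\equiv\mathbf{0}$, $\mathbf{u}_0=\gamma$, $\|\mathbf{u}_0'\|\equiv 1$, $\kappa_0\equiv 0$, the maps $\mathbf{u}_i(s)=\dfrac{\mathbf{u}_{i-1}'(s)+\kappa_{i-1}(s)\mathbf{u}_{i-2}(s)}{\|\mathbf{u}_{i-1}'(s)+\kappa_{i-1}(s)\mathbf{u}_{i-2}(s)\|}$ with $\kappa_i(s)=\|\mathbf{u}_{i-1}'(s)+\kappa_{i-1}(s)\mathbf{u}_{i-2}(s)\|>0$ are well-defined for $1\le i\le n-1$ and all $s\in I$. Then $\mathbf{u}_0(s),\dots,\mathbf{u}_{n-1}(s)$ are orthonormal, and the spherical dual curve $\mathbf{u}_n:I\to S^n$ is defined by requiring $\mathbf{u}_0(s),\dots,\mathbf{u}_n(s)$ orthonormal with $\det(\mathbf{u}_0(s),\dots,\mathbf{u}_n(s))=1$. For $P\in S^n$ with $P\cdot\mathbf{u}_n(s)\neq\pm1$,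 the spherical pedal curve is $ped_{\gamma,P}(s)=\dfrac{P-(P\cdot\mathbf{u}_n(s))\mathbf{u}_n(s)}{\sqrt{1-(P\cdot\mathbf{u}_n(s))^2}}$. For any $P\in S^n$ the spherical orthotomic curve is $ort_{\gamma,P}(s)=\sum_{i=0}^{n-1}(P\cdot\mathbf{u}_i(s))\mathbf{u}_i(s)-(P\cdot\mathbf{u}_n(s))\mathbf{u}_n(s)=P-2(P\cdot\mathbf{u}_n(s))\mathbf{u}_n(s)$. For $P\in S^n$, $\Phi_P:\mathbb{R}^{n+1}\to\mathbb{R}^{n+1}$ is $\Phi_P(\mathbf{x})=2(P\cdot\mathbf{x})\mathbf{x}-P$; a singular point of $\Phi_P$ is a point where its differential is not of full rank. *)

theory Defs
  imports "HOL-Analysis.Analysis"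
begin

text \<open>Vectors of R^(n+1) are modelled as real^'m with card (UNIV :: 'm set) = n+1; the index type
  carries an enumeration fixing the order of the coordinates (used for the determinant).\<close>

definition vderiv :: "(real \<Rightarrow> 'a::real_normed_vector) \<Rightarrow> real \<Rightarrow> 'a" where
  "vderiv f = (\<lambda>s. vector_derivative f (at s))"

definition smooth_curve_on :: "real set \<Rightarrow> (real \<Rightarrow> 'a::real_normed_vector) \<Rightarrow> bool" where
  "smooth_curve_on I f \<longleftrightarrow> (\<forall>k. \<forall>s\<in>I. ((vderiv ^^ k) f) differentiable (at s))"

text \<open>frm g i = (u_(i-1), u_i, kappa_i), with u_(-1) = 0, u_0 = g, kappa_0 = 0.\<close>
fun frm :: "(real \<Rightarrow> 'a::real_normed_vector) \<Rightarrow> nat \<Rightarrow> (real \<Rightarrow> 'a) \<times> (real \<Rightarrow> 'a) \<times> (real \<Rightarrow> real)" where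
  "frm g 0 = ((\<lambda>s. 0), g, (\<lambda>s. 0))"
| "frm g (Suc i) = (case frm g i of (up, u, k) \<Rightarrow>
      (let w = (\<lambda>s. vderiv u s + k s *\<^sub>R up s)
       in (u, (\<lambda>s. inverse (norm (w s)) *\<^sub>R w s), (\<lambda>s. norm (w s)))))"

definition sframe :: "(real \<Rightarrow> 'a::real_normed_vector) \<Rightarrow> nat \<Rightarrow> real \<Rightarrow> 'a" where
  "sframe g i = fst (snd (frm g i))"

definition scurv :: "(real \<Rightarrow> 'a::real_normed_vector) \<Rightarrow> nat \<Rightarrow> real \<Rightarrow> real" where
  "scurv g i = snd (snd (frm g i))"

definition sph_unit_speed_curve :: "real set \<Rightarrow> (real \<Rightarrow> real^'m::enum) \<Rightarrow> bool" where
  "sph_unit_speed_curve I g \<longleftrightarrow>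
     smooth_curve_on I g \<and>
     (\<forall>s\<in>I. norm (g s) = 1 \<and> norm (vderiv g s) = 1) \<and>
     (\<forall>i. 1 \<le> i \<and> i \<le> card (UNIV :: 'm set) - 2 \<longrightarrow> (\<forall>s\<in>I. scurv g i s > 0))"

definition idx_pos :: "'m::enum \<Rightarrow> nat" where
  "idx_pos j = (LEAST k. (Enum.enum :: 'm::enum list) ! k = j)"

definition frame_det :: "(nat \<Rightarrow> real^'m::enum) \<Rightarrow> real" where
  "frame_det v = det (\<chi> i j. v (idx_pos i) $ j :: real^'m::enum^'m::enum)"

text \<open>Spherical dual curve u_n (here n = card (UNIV :: 'm set) - 1).\<close>
definition sph_dual :: "(real \<Rightarrow> real^'m::enum) \<Rightarrow> real \<Rightarrow> real^'m::enum" where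
  "sph_dual g s = (THE v. (\<forall>i<card (UNIV :: 'm set) - 1. sframe g i s \<bullet> v = 0) \<and> norm v = 1 \<and>
       frame_det (\<lambda>i. if i = card (UNIV :: 'm set) - 1 then v else sframe g i s) = 1)"

definition sph_pedal :: "(real \<Rightarrow> real^'m::enum) \<Rightarrow> real^'m::enum \<Rightarrow> real \<Rightarrow> real^'m::enum" where
  "sph_pedal g P s = inverse (sqrt (1 - (P \<bullet> sph_dual g s)^2)) *\<^sub>R
       (P - (P \<bullet> sph_dual g s) *\<^sub>R sph_dual g s)"

definition sph_orthotomic :: "(real \<Rightarrow> real^'m::enum) \<Rightarrow> real^'m::enum \<Rightarrow> real \<Rightarrow> real^'m::enum" where
  "sph_orthotomic g P s = P - (2 * (P \<bullet> sph_dual g s)) *\<^sub>R sph_dual g s"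

definition PhiP :: "'a::real_inner \<Rightarrow> 'a \<Rightarrow> 'a" where
  "PhiP P x = (2 * (P \<bullet> x)) *\<^sub>R x - P"

definition singular_point :: "('a::euclidean_space \<Rightarrow> 'a) \<Rightarrow> 'a \<Rightarrow> bool" where
  "singular_point f x \<longleftrightarrow> dim (range (frechet_derivative f (at x))) < DIM('a)"

end

theory Submission
  imports Defs
begin


fun Ck :: "nat \<Rightarrow> real set \<Rightarrow> (real \<Rightarrow> 'a::real_normed_vector) \<Rightarrow> bool" where
  "Ck 0 I f = True"
| "Ck (Suc k) I f = (\<exists>f'. (\<forall>s\<in>I. (f has_vector_derivative f' s) (at s)) \<and> Ck k I f')"

lemma Ck_mono: "Ck (Suc k) I f \<Longrightarrow> Ck k I f"
proof (induction k arbitrary: f)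
  case 0 then show ?case by simp
next
  case (Suc k) then show ?case by (metis Ck.simps(2))
qed

lemma Ck_le: "Ck k I f \<Longrightarrow> j \<le> k \<Longrightarrow> Ck j I f"
proof (induction k)
  case 0 then show ?case by simp
next
  case (Suc k)
  show ?case
  proof (cases "j = Suc k")
    case True then show ?thesis using Suc by simp
  next
    case False then show ?thesis using Suc.IH Suc.prems Ck_mono[of k I f] by simp
  qed
qed

lemma Ck_transform:
  assumes "open I" "Ck k I f" "\<And>s. s \<in> I \<Longrightarrow> f s = h s" shows "Ck k I h"
  using assms(2,3)
proof (induction k arbitrary: f h)
  case 0 then show ?case by simp
next
  case (Suc k)
  then obtain f' where d: "\<forall>s\<in>I. (f has_vector_derivative f' s) (at s)" and c: "Ck k I f'" by auto
  have "\<forall>s\<in>I. (h has_vector_derivative f' s) (at s)"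
    using d has_vector_derivative_transform_within_open[OF _ assms(1)] Suc.prems(2) by blast
  then show ?case using c by auto
qed

lemma Ck_const: "Ck k I (\<lambda>s. c)"
proof (induction k arbitrary: c)
  case 0 then show ?case by simp
next
  case (Suc k)
  have "\<forall>s\<in>I. ((\<lambda>s. c) has_vector_derivative (\<lambda>s. 0) s) (at s)" by (auto intro: derivative_eq_intros)
  then show ?case using Suc.IH[of 0] by (simp only: Ck.simps) (rule exI[of _ "\<lambda>s. 0"], simp)
qed

lemma Ck_SucI: "(\<And>s. s\<in>I \<Longrightarrow> (f has_vector_derivative f' s) (at s)) \<Longrightarrow> Ck k I f' \<Longrightarrow> Ck (Suc k) I f"
  by auto

lemma Ck_SucE: assumes "Ck (Suc k) I f"
  obtains f' where "\<And>s. s\<in>I \<Longrightarrow> (f has_vector_derivative f' s) (at s)" "Ck k I f'"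
  using assms by auto

lemma Ck_add: "Ck k I f \<Longrightarrow> Ck k I h \<Longrightarrow> Ck k I (\<lambda>s. f s + h s)"
proof (induction k arbitrary: f h)
  case 0 then show ?case by simp
next
  case (Suc k)
  obtain f' where f: "\<And>s. s\<in>I \<Longrightarrow> (f has_vector_derivative f' s) (at s)" "Ck k I f'"
    using Ck_SucE[OF Suc.prems(1)] by blast
  obtain h' where h: "\<And>s. s\<in>I \<Longrightarrow> (h has_vector_derivative h' s) (at s)" "Ck k I h'"
    using Ck_SucE[OF Suc.prems(2)] by blast
  show ?case
  proof (rule Ck_SucI)
    show "((\<lambda>s. f s + h s) has_vector_derivative (\<lambda>s. f' s + h' s) s) (at s)" if "s \<in> I" for s
      using has_vector_derivative_add[OF f(1)[OF that] h(1)[OF that]] by simp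
    show "Ck k I (\<lambda>s. f' s + h' s)" by (rule Suc.IH[OF f(2) h(2)])
  qed
qed

lemma Ck_scaleR: "Ck k I (a::real\<Rightarrow>real) \<Longrightarrow> Ck k I f \<Longrightarrow> Ck k I (\<lambda>s. a s *\<^sub>R f s)"
proof (induction k arbitrary: a f)
  case 0 then show ?case by simp
next
  case (Suc k)
  obtain f' where f: "\<And>s. s\<in>I \<Longrightarrow> (f has_vector_derivative f' s) (at s)" "Ck k I f'"
    using Ck_SucE[OF Suc.prems(2)] by blast
  obtain a' where a: "\<And>s. s\<in>I \<Longrightarrow> (a has_vector_derivative a' s) (at s)" "Ck k I a'"
    using Ck_SucE[OF Suc.prems(1)] by blast
  show ?case
  proof (rule Ck_SucI)
    show "((\<lambda>s. a s *\<^sub>R f s) has_vector_derivative (\<lambda>s. a s *\<^sub>R f' s + a' s *\<^sub>R f s) s) (at s)" if "s \<in> I" for s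
      using bounded_bilinear.has_vector_derivative[OF bounded_bilinear_scaleR a(1)[OF that] f(1)[OF that]] by simp
    have "Ck k I a" "Ck k I f" using Ck_mono Suc.prems by blast+
    then show "Ck k I (\<lambda>s. a s *\<^sub>R f' s + a' s *\<^sub>R f s)"
      using Ck_add Suc.IH f(2) a(2) by blast
  qed
qed

lemma Ck_inner: "Ck k I f \<Longrightarrow> Ck k I h \<Longrightarrow> Ck k I (\<lambda>s. f s \<bullet> (h s::'a::real_inner))"
proof (induction k arbitrary: f h)
  case 0 then show ?case by simp
next
  case (Suc k)
  obtain f' where f: "\<And>s. s\<in>I \<Longrightarrow> (f has_vector_derivative f' s) (at s)" "Ck k I f'"
    using Ck_SucE[OF Suc.prems(1)] by blast
  obtain h' where h: "\<And>s. s\<in>I \<Longrightarrow> (h has_vector_derivative h' s) (at s)" "Ck k I h'"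
    using Ck_SucE[OF Suc.prems(2)] by blast
  show ?case
  proof (rule Ck_SucI)
    show "((\<lambda>s. f s \<bullet> h s) has_vector_derivative (\<lambda>s. f s \<bullet> h' s + f' s \<bullet> h s) s) (at s)" if "s \<in> I" for s
      using bounded_bilinear.has_vector_derivative[OF bounded_bilinear_inner f(1)[OF that] h(1)[OF that]] by simp
    have "Ck k I f" "Ck k I h" using Ck_mono Suc.prems by blast+
    then show "Ck k I (\<lambda>s. f s \<bullet> h' s + f' s \<bullet> h s)"
      using Ck_add Suc.IH f(2) h(2) by blast
  qed
qed

lemma d_inv:
  fixes a :: "real \<Rightarrow> real"
  assumes "(a has_vector_derivative d) (at s)" "a s \<noteq> 0"
  shows "((\<lambda>x. inverse (a x)) has_vector_derivative (- (inverse (a s) * inverse (a s))) *\<^sub>R d) (at s)"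
proof -
  have "((\<lambda>x. inverse (a x)) has_real_derivative (- (d * inverse (a s ^ Suc (Suc 0))))) (at s)"
    by (rule DERIV_inverse_fun) (use assms in \<open>simp_all add: has_real_derivative_iff_has_vector_derivative\<close>)
  moreover have "- (d * inverse (a s ^ Suc (Suc 0))) = (- (inverse (a s) * inverse (a s))) *\<^sub>R d"
    by (simp add: inverse_mult_distrib ac_simps)
  ultimately show ?thesis by (simp add: has_real_derivative_iff_has_vector_derivative ac_simps)
qed

lemma d_sqrt:
  fixes a :: "real \<Rightarrow> real"
  assumes "(a has_vector_derivative d) (at s)" "a s > 0"
  shows "((\<lambda>x. sqrt (a x)) has_vector_derivative inverse (2 * sqrt (a s)) *\<^sub>R d) (at s)"
proof -
  have "((\<lambda>x. sqrt (a x)) has_real_derivative (inverse (sqrt (a s)) / 2 * d)) (at s)"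
    by (rule DERIV_chain2[OF DERIV_real_sqrt]) (use assms in \<open>simp_all add: has_real_derivative_iff_has_vector_derivative\<close>)
  moreover have "inverse (sqrt (a s)) / 2 * d = inverse (2 * sqrt (a s)) *\<^sub>R d"
    by (simp add: inverse_mult_distrib)
  ultimately show ?thesis by (simp add: has_real_derivative_iff_has_vector_derivative)
qed

lemma Ck_inverse: "Ck k I (a::real\<Rightarrow>real) \<Longrightarrow> (\<And>s. s\<in>I \<Longrightarrow> a s \<noteq> 0) \<Longrightarrow> Ck k I (\<lambda>s. inverse (a s))"
proof (induction k arbitrary: a)
  case 0 then show ?case by simp
next
  case (Suc k)
  obtain a' where a: "\<And>s. s\<in>I \<Longrightarrow> (a has_vector_derivative a' s) (at s)" "Ck k I a'"
    using Ck_SucE[OF Suc.prems(1)] by blast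
  show ?case
  proof (rule Ck_SucI)
    show "((\<lambda>s. inverse (a s)) has_vector_derivative (\<lambda>s. (- (inverse (a s) * inverse (a s))) *\<^sub>R a' s) s) (at s)"
      if "s \<in> I" for s using d_inv[OF a(1)[OF that] Suc.prems(2)[OF that]] by simp
    have i: "Ck k I (\<lambda>s. inverse (a s))" using Suc.IH Ck_mono Suc.prems by blast
    have "Ck k I (\<lambda>s. (-1) *\<^sub>R (inverse (a s) *\<^sub>R inverse (a s)))"
      by (rule Ck_scaleR[OF Ck_const Ck_scaleR[OF i i]])
    then have "Ck k I (\<lambda>s. - (inverse (a s) * inverse (a s)))" by simp
    from Ck_scaleR[OF this a(2)] show "Ck k I (\<lambda>s. (- (inverse (a s) * inverse (a s))) *\<^sub>R a' s)" .
  qed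
qed

lemma Ck_sqrt: "Ck k I (a::real\<Rightarrow>real) \<Longrightarrow> (\<And>s. s\<in>I \<Longrightarrow> a s > 0) \<Longrightarrow> Ck k I (\<lambda>s. sqrt (a s))"
proof (induction k arbitrary: a)
  case 0 then show ?case by simp
next
  case (Suc k)
  obtain a' where a: "\<And>s. s\<in>I \<Longrightarrow> (a has_vector_derivative a' s) (at s)" "Ck k I a'"
    using Ck_SucE[OF Suc.prems(1)] by blast
  show ?case
  proof (rule Ck_SucI)
    show "((\<lambda>s. sqrt (a s)) has_vector_derivative (\<lambda>s. inverse (2 * sqrt (a s)) *\<^sub>R a' s) s) (at s)"
      if "s \<in> I" for s using d_sqrt[OF a(1)[OF that] Suc.prems(2)[OF that]] by simp
    have i: "Ck k I (\<lambda>s. sqrt (a s))" using Suc.IH Ck_mono Suc.prems by blast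
    have "Ck k I (\<lambda>s. 2 *\<^sub>R sqrt (a s))" by (rule Ck_scaleR[OF Ck_const i])
    then have "Ck k I (\<lambda>s. 2 * sqrt (a s))" by simp
    then have "Ck k I (\<lambda>s. inverse (2 * sqrt (a s)))"
      by (rule Ck_inverse) (simp, metis Suc.prems(2) less_irrefl)
    from Ck_scaleR[OF this a(2)] show "Ck k I (\<lambda>s. inverse (2 * sqrt (a s)) *\<^sub>R a' s)" .
  qed
qed



abbreviation "upf g i \<equiv> fst (frm g i)"

lemma frm_0: "sframe g 0 = g" "scurv g 0 = (\<lambda>s. 0)" "upf g 0 = (\<lambda>s. 0)"
  by (simp_all add: sframe_def scurv_def)

lemma frm_Suc:
  "upf g (Suc i) = sframe g i"
  "scurv g (Suc i) = (\<lambda>s. norm (vderiv (sframe g i) s + scurv g i s *\<^sub>R upf g i s))"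
  "sframe g (Suc i) = (\<lambda>s. inverse (norm (vderiv (sframe g i) s + scurv g i s *\<^sub>R upf g i s)) *\<^sub>R
        (vderiv (sframe g i) s + scurv g i s *\<^sub>R upf g i s))"
  by (simp_all add: sframe_def scurv_def Let_def split: prod.split)

declare frm.simps(2)[simp del]

lemma smooth_vderiv: "smooth_curve_on I f \<Longrightarrow> smooth_curve_on I (vderiv f)"
  unfolding smooth_curve_on_def by (metis comp_apply funpow_Suc_right)

lemma smooth_Ck: "smooth_curve_on I f \<Longrightarrow> Ck k I f"
proof (induction k arbitrary: f)
  case 0 then show ?case by simp
next
  case (Suc k)
  show ?case
  proof (rule Ck_SucI)
    show "(f has_vector_derivative vderiv f s) (at s)" if "s \<in> I" for s
      using Suc.prems that unfolding smooth_curve_on_def vderiv_def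
      by (metis funpow_0 vector_derivative_works)
    show "Ck k I (vderiv f)" using Suc.IH smooth_vderiv Suc.prems by blast
  qed
qed

lemma Ck_vderiv:
  assumes "open I" "Ck (Suc k) I f"
  shows "Ck k I (vderiv f)" "\<And>s. s \<in> I \<Longrightarrow> (f has_vector_derivative vderiv f s) (at s)"
proof -
  obtain f' where f: "\<And>s. s\<in>I \<Longrightarrow> (f has_vector_derivative f' s) (at s)" "Ck k I f'"
    using Ck_SucE[OF assms(2)] by blast
  have e: "vderiv f s = f' s" if "s \<in> I" for s
    using f(1)[OF that] unfolding vderiv_def by (rule vector_derivative_at)
  show "Ck k I (vderiv f)" by (rule Ck_transform[OF assms(1) f(2)]) (simp add: e)
  show "(f has_vector_derivative vderiv f s) (at s)" if "s \<in> I" for s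
    using f(1)[OF that] e[OF that] by simp
qed

lemma const_inner_deriv:
  fixes f h :: "real \<Rightarrow> 'a::real_inner"
  assumes "open I" "s \<in> I" "(f has_vector_derivative f') (at s)" "(h has_vector_derivative h') (at s)"
    "\<And>t. t \<in> I \<Longrightarrow> f t \<bullet> h t = c"
  shows "f s \<bullet> h' + f' \<bullet> h s = 0"
proof -
  have d: "((\<lambda>t. f t \<bullet> h t) has_vector_derivative (f s \<bullet> h' + f' \<bullet> h s)) (at s)"
    using bounded_bilinear.has_vector_derivative[OF bounded_bilinear_inner assms(3,4)] by simp
  have "((\<lambda>t. c) has_vector_derivative 0) (at s)" by (rule has_vector_derivative_const)
  then have "((\<lambda>t. f t \<bullet> h t) has_vector_derivative 0) (at s)"
    by (rule has_vector_derivative_transform_within_open[OF _ assms(1,2)]) (simp add: assms(5))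
  then show ?thesis using d vector_derivative_unique_at by blast
qed

context
  fixes I :: "real set" and g :: "real \<Rightarrow> real^'m::enum"
  assumes I: "open I" and C: "sph_unit_speed_curve I g"
begin

lemma frame_smooth:
  "i \<le> CARD('m) - 2 \<Longrightarrow> (\<forall>k. Ck k I (sframe g i)) \<and> (\<forall>k. Ck k I (upf g i)) \<and> (\<forall>k. Ck k I (scurv g i))"
proof (induction i)
  case 0
  have "smooth_curve_on I g" using C unfolding sph_unit_speed_curve_def by blast
  then show ?case by (simp add: frm_0 smooth_Ck Ck_const)
next
  case (Suc i)
  then have IH: "\<And>k. Ck k I (sframe g i)" "\<And>k. Ck k I (upf g i)" "\<And>k. Ck k I (scurv g i)" by auto
  define W where "W = (\<lambda>s. vderiv (sframe g i) s + scurv g i s *\<^sub>R upf g i s)"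
  have Kpos: "scurv g (Suc i) s > 0" if "s \<in> I" for s
    using C Suc.prems that unfolding sph_unit_speed_curve_def by auto
  have Wn: "norm (W s) > 0" if "s \<in> I" for s using Kpos[OF that] by (simp add: frm_Suc W_def)
  have CW: "Ck k I W" for k
    unfolding W_def by (rule Ck_add[OF Ck_vderiv(1)[OF I IH(1)] Ck_scaleR[OF IH(3) IH(2)]])
  have CK: "Ck k I (\<lambda>s. norm (W s))" for k
  proof -
    have "Ck k I (\<lambda>s. sqrt (W s \<bullet> W s))"
      by (rule Ck_sqrt[OF Ck_inner[OF CW CW]]) (use Wn in \<open>auto simp: inner_gt_zero_iff\<close>)
    then show ?thesis by (simp add: norm_eq_sqrt_inner)
  qed
  have CU: "Ck k I (\<lambda>s. inverse (norm (W s)) *\<^sub>R W s)" for k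
    by (rule Ck_scaleR[OF Ck_inverse[OF CK] CW]) (use Wn in force)
  have e1: "sframe g (Suc i) = (\<lambda>s. inverse (norm (W s)) *\<^sub>R W s)"
    and e2: "scurv g (Suc i) = (\<lambda>s. norm (W s))" and e3: "upf g (Suc i) = sframe g i"
    by (simp_all only: frm_Suc W_def)
  show ?case unfolding e1 e2 e3 using CK CU IH(1) by blast
qed

lemma frame_diff: "i \<le> CARD('m) - 2 \<Longrightarrow> s \<in> I \<Longrightarrow> (sframe g i has_vector_derivative vderiv (sframe g i) s) (at s)"
  using frame_smooth Ck_vderiv(2)[OF I] by blast

lemma W_eq:
  assumes "Suc i \<le> CARD('m) - 2" "s \<in> I"
  shows "vderiv (sframe g i) s + scurv g i s *\<^sub>R upf g i s = scurv g (Suc i) s *\<^sub>R sframe g (Suc i) s"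
proof -
  have Kpos: "scurv g (Suc i) s > 0"
    using C assms unfolding sph_unit_speed_curve_def by auto
  then show ?thesis by (simp add: frm_Suc)
qed

lemma frame_deriv:
  assumes "Suc i \<le> CARD('m) - 2" "s \<in> I"
  shows "(sframe g i has_vector_derivative (scurv g (Suc i) s *\<^sub>R sframe g (Suc i) s - scurv g i s *\<^sub>R upf g i s)) (at s)"
proof -
  have "vderiv (sframe g i) s = scurv g (Suc i) s *\<^sub>R sframe g (Suc i) s - scurv g i s *\<^sub>R upf g i s"
    using W_eq[OF assms] by (simp add: algebra_simps)
  then show ?thesis using frame_diff[of i s] assms by simp
qed

lemma unit_frame: "Suc i \<le> CARD('m) - 2 \<Longrightarrow> s \<in> I \<Longrightarrow> sframe g (Suc i) s \<bullet> sframe g (Suc i) s = 1"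
proof -
  assume a: "Suc i \<le> CARD('m) - 2" "s \<in> I"
  have Kpos: "scurv g (Suc i) s > 0"
    using C a unfolding sph_unit_speed_curve_def by auto
  then have "norm (sframe g (Suc i) s) = 1" by (simp add: frm_Suc)
  then show ?thesis by (simp add: dot_square_norm)
qed

lemma frame_orth:
  "m \<le> CARD('m) - 2 \<Longrightarrow> i \<le> m \<Longrightarrow> j \<le> m \<Longrightarrow> t \<in> I \<Longrightarrow>
     sframe g i t \<bullet> sframe g j t = (if i = j then 1 else 0)"
proof (induction m arbitrary: i j t)
  case 0
  then have "norm (g t) = 1" using C unfolding sph_unit_speed_curve_def by blast
  then show ?case using 0 by (simp add: frm_0 dot_square_norm)
next
  case (Suc m)
  note IH = Suc.IH[OF _ _ _ Suc.prems(4)]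
  have IHI: "\<And>i j t. i \<le> m \<Longrightarrow> j \<le> m \<Longrightarrow> t \<in> I \<Longrightarrow> sframe g i t \<bullet> sframe g j t = (if i = j then 1 else 0)"
    using Suc.IH Suc.prems(1) by simp
  have mle: "m \<le> CARD('m) - 2" using Suc.prems(1) by simp
  have key: "sframe g (Suc m) t \<bullet> sframe g j t = 0" if "j \<le> m" for j
  proof -
    have A: "vderiv (sframe g m) t \<bullet> sframe g j t + scurv g m t * (upf g m t \<bullet> sframe g j t) = 0"
    proof (cases m)
      case 0
      then have j0: "j = 0" using that by simp
      have "g t \<bullet> vderiv g t + vderiv g t \<bullet> g t = 0"
        by (rule const_inner_deriv[OF I Suc.prems(4), where c = 1])
           (use frame_diff[of 0] Suc.prems(4) IHI[of 0 0] 0 in \<open>simp_all add: frm_0\<close>)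
      then show ?thesis using 0 j0 by (simp add: frm_0 inner_commute)
    next
      case (Suc m')
      show ?thesis
      proof (cases "j = m")
        case True
        have "sframe g m t \<bullet> vderiv (sframe g m) t + vderiv (sframe g m) t \<bullet> sframe g m t = 0"
          by (rule const_inner_deriv[OF I Suc.prems(4) frame_diff frame_diff, where c = 1])
             (use mle Suc.prems(4) IHI[of m m] in auto)
        moreover have "upf g m t \<bullet> sframe g j t = 0"
        proof -
          have "upf g m t = sframe g m' t" by (simp only: Suc frm_Suc(1))
          then show ?thesis using True Suc IHI[of m' m t] Suc.prems(4) by simp
        qed
        ultimately show ?thesis using True by (simp add: inner_commute)
      next
        case False
        then have jm: "j < m" using that by simp
        have d1: "(sframe g j has_vector_derivative (scurv g (Suc j) t *\<^sub>R sframe g (Suc j) t - scurv g j t *\<^sub>R upf g j t)) (at t)"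
          using frame_deriv[of j t] jm mle Suc.prems(4) by simp
        have "sframe g m t \<bullet> (scurv g (Suc j) t *\<^sub>R sframe g (Suc j) t - scurv g j t *\<^sub>R upf g j t)
              + vderiv (sframe g m) t \<bullet> sframe g j t = 0"
          by (rule const_inner_deriv[OF I Suc.prems(4) frame_diff d1, where c = 0])
             (use mle Suc.prems(4) IHI[of m j] jm in auto)
        moreover have "sframe g m t \<bullet> upf g j t = 0"
        proof (cases j)
          case 0 then show ?thesis by (simp add: frm_0)
        next
          case (Suc j') then show ?thesis using IHI[of m j' t] jm Suc.prems(4) by (simp add: frm_Suc(1))
        qed
        moreover have "sframe g m t \<bullet> sframe g (Suc j) t = (if Suc j = m then 1 else 0)"
          using IHI[of m "Suc j" t] jm Suc.prems(4) by simp
        moreover have "upf g m t \<bullet> sframe g j t = (if j = m' then 1 else 0)"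
          using IHI[of m' j t] jm Suc.prems(4) \<open>m = Suc m'\<close> by (simp add: frm_Suc(1))
        ultimately show ?thesis using \<open>m = Suc m'\<close>
          by (auto simp: inner_diff_right split: if_splits)
      qed
    qed
    have "vderiv (sframe g m) t + scurv g m t *\<^sub>R upf g m t = scurv g (Suc m) t *\<^sub>R sframe g (Suc m) t"
      by (rule W_eq) (use Suc.prems in auto)
    then have "scurv g (Suc m) t * (sframe g (Suc m) t \<bullet> sframe g j t) = 0"
      using A by (metis inner_add_left inner_scaleR_left)
    moreover have "scurv g (Suc m) t > 0"
      using C Suc.prems unfolding sph_unit_speed_curve_def by auto
    ultimately show ?thesis by simp
  qed
  show ?case
  proof (cases "i = Suc m \<or> j = Suc m")
    case False then show ?thesis using IHI Suc.prems by auto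
  next
    case True
    show ?thesis
    proof (cases "i = j")
      case True then show ?thesis using unit_frame[of m t] Suc.prems \<open>i = Suc m \<or> j = Suc m\<close> by auto
    next
      case False
      then show ?thesis using key \<open>i = Suc m \<or> j = Suc m\<close> Suc.prems
        by (auto simp: inner_commute le_Suc_eq)
    qed
  qed
qed

end



lemma idx_pos_props:
  fixes j :: "'m::enum"
  shows "idx_pos j < CARD('m)" "(Enum.enum :: 'm list) ! idx_pos j = j"
proof -
  have "j \<in> set (Enum.enum :: 'm list)" by (simp add: UNIV_enum[symmetric])
  then obtain k where k: "k < length (Enum.enum :: 'm list)" "(Enum.enum :: 'm list) ! k = j"
    by (auto simp: in_set_conv_nth)
  show "(Enum.enum :: 'm list) ! idx_pos j = j" unfolding idx_pos_def by (rule LeastI[of _ k]) (rule k(2))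
  have "idx_pos j \<le> k" unfolding idx_pos_def by (rule Least_le) (rule k(2))
  then show "idx_pos j < CARD('m)" using k(1) by (simp add: card_UNIV_length_enum)
qed

lemma idx_pos_inj: "idx_pos (i::'m::enum) = idx_pos j \<longleftrightarrow> i = j"
  by (metis idx_pos_props(2))

lemma idx_pos_surj: "k < CARD('m::enum) \<Longrightarrow> \<exists>j::'m. idx_pos j = k"
proof -
  assume k: "k < CARD('m)"
  let ?j = "(Enum.enum :: 'm list) ! k"
  have "(Enum.enum :: 'm list) ! idx_pos ?j = (Enum.enum :: 'm list) ! k" by (rule idx_pos_props(2))
  moreover have "idx_pos ?j < length (Enum.enum :: 'm list)" "k < length (Enum.enum :: 'm list)"
    using idx_pos_props(1)[of ?j] k by (simp_all add: card_UNIV_length_enum)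
  ultimately have "idx_pos ?j = k" using enum_distinct nth_eq_iff_index_eq by blast
  then show ?thesis by blast
qed

lemma frame_mat_orth:
  fixes F :: "nat \<Rightarrow> real^'m::enum"
  assumes "\<And>i j. i < CARD('m::enum) \<Longrightarrow> j < CARD('m::enum) \<Longrightarrow> F i \<bullet> F j = (if i = j then 1 else 0)"
  shows "orthogonal_matrix (\<chi> i j. F (idx_pos i) $ j :: real^'m::enum^'m::enum)"
  unfolding orthogonal_matrix_orthonormal_rows
proof safe
  have r: "row i (\<chi> i j. F (idx_pos i) $ j :: real^'m::enum^'m::enum) = F (idx_pos i)" for i
    by (simp add: row_def vec_eq_iff)
  show "norm (row i (\<chi> i j. F (idx_pos i) $ j :: real^'m::enum^'m::enum)) = 1" for i
    using assms[of "idx_pos i" "idx_pos i"] idx_pos_props(1)[of i] unfolding r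
    by (simp add: norm_eq_sqrt_inner)
  show "orthogonal (row i (\<chi> i j. F (idx_pos i) $ j :: real^'m::enum^'m::enum)) (row j (\<chi> i j. F (idx_pos i) $ j))"
    if "i \<noteq> j" for i j
    using assms[of "idx_pos i" "idx_pos j"] idx_pos_props(1)[of i] idx_pos_props(1)[of j] that idx_pos_inj[of i j]
    unfolding r orthogonal_def by simp
qed

lemma frame_det_neg:
  fixes vs :: "nat \<Rightarrow> real^'m::enum" and N :: nat
  assumes "N < CARD('m::enum)"
  shows "frame_det (\<lambda>i. if i = N then - v else vs i) = - frame_det (\<lambda>i. if i = N then v else vs i)"
proof -
  obtain k :: 'm where k: "idx_pos k = N" using idx_pos_surj assms by blast
  let ?a = "\<lambda>i::'m::enum. (\<chi> j. (if idx_pos i = N then v else vs (idx_pos i)) $ j)"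
  have "(\<chi> i j. (if idx_pos i = N then - v else vs (idx_pos i)) $ j :: real^'m::enum^'m::enum)
        = (\<chi> i. if i = k then (-1) *s ?a i else ?a i)"
    using k idx_pos_inj[of _ k] by (auto simp: vec_eq_iff)
  moreover have "(\<chi> i j. (if idx_pos i = N then v else vs (idx_pos i)) $ j :: real^'m::enum^'m::enum)
        = (\<chi> i. if i = k then ?a i else ?a i)"
    by (simp add: vec_eq_iff)
  ultimately show ?thesis unfolding frame_det_def
    using det_row_mul[of k "-1::real" ?a ?a] by (simp add: if_distrib)
qed


lemma dual_unique:
  fixes vs :: "nat \<Rightarrow> real^'m::enum"
  assumes orth: "\<And>i j. i < CARD('m::enum) - 1 \<Longrightarrow> j < CARD('m::enum) - 1 \<Longrightarrow> vs i \<bullet> vs j = (if i = j then 1 else 0)"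
  shows "\<exists>!v. (\<forall>i<CARD('m::enum) - 1. vs i \<bullet> v = 0) \<and> norm v = 1 \<and>
            frame_det (\<lambda>i. if i = CARD('m::enum) - 1 then v else vs i) = 1"
proof -
  define N where "N = CARD('m::enum) - 1"
  have NC: "N < CARD('m::enum)" unfolding N_def by simp
  have Forth: "\<And>i j. i < CARD('m::enum) \<Longrightarrow> j < CARD('m::enum) \<Longrightarrow>
        (if i = N then v else vs i) \<bullet> (if j = N then v else vs j) = (if i = j then 1 else 0)"
    if v: "norm v = 1" "\<forall>i<N. vs i \<bullet> v = 0" for v
  proof -
    fix i j assume ij: "i < CARD('m::enum)" "j < CARD('m::enum)"
    show "(if i = N then v else vs i) \<bullet> (if j = N then v else vs j) = (if i = j then 1 else 0)"
      using ij v orth[of i j] unfolding N_def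
      by (auto simp: inner_commute dot_square_norm)
  qed
  have detpm: "frame_det (\<lambda>i. if i = N then v else vs i) = 1 \<or> frame_det (\<lambda>i. if i = N then v else vs i) = -1"
    if v: "norm v = 1" "\<forall>i<N. vs i \<bullet> v = 0" for v
    unfolding frame_det_def by (rule det_orthogonal_matrix[OF frame_mat_orth[OF Forth[OF v]]])
  have "dim (vs ` {..<N}) < DIM(real^'m::enum)"
  proof -
    have "dim (vs ` {..<N}) \<le> card (vs ` {..<N})" by (rule dim_le_card) (auto intro: span_base)
    also have "\<dots> \<le> N" using card_image_le[of "{..<N}" vs] by simp
    finally show ?thesis using NC by simp
  qed
  then obtain w where w: "w \<noteq> 0" "\<And>y. y \<in> span (vs ` {..<N}) \<Longrightarrow> orthogonal w y"
    using orthogonal_to_subspace_exists by blast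
  define v0 where "v0 = inverse (norm w) *\<^sub>R w"
  have v0: "norm v0 = 1" "\<forall>i<N. vs i \<bullet> v0 = 0"
  proof -
    have "vs i \<bullet> w = 0" if "i < N" for i
      using w(2)[of "vs i"] that by (auto simp: orthogonal_def inner_commute intro: span_base)
    then show "norm v0 = 1" "\<forall>i<N. vs i \<bullet> v0 = 0" using w(1) by (auto simp: v0_def)
  qed
  have ex: "\<exists>v. (\<forall>i<N. vs i \<bullet> v = 0) \<and> norm v = 1 \<and> frame_det (\<lambda>i. if i = N then v else vs i) = 1"
  proof (cases "frame_det (\<lambda>i. if i = N then v0 else vs i) = 1")
    case True then show ?thesis using v0 by blast
  next
    case False
    then have "frame_det (\<lambda>i. if i = N then v0 else vs i) = -1" using detpm[OF v0] by blast
    then have "frame_det (\<lambda>i. if i = N then - v0 else vs i) = 1" using frame_det_neg[OF NC] by simp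
    moreover have "norm (- v0) = 1" "\<forall>i<N. vs i \<bullet> (- v0) = 0" using v0 by auto
    ultimately show ?thesis by blast
  qed
  have un: "w = v" if v: "\<forall>i<N. vs i \<bullet> v = 0" "norm v = 1" "frame_det (\<lambda>i. if i = N then v else vs i) = 1"
     and w: "\<forall>i<N. vs i \<bullet> w = 0" "norm w = 1" "frame_det (\<lambda>i. if i = N then w else vs i) = 1" for v w
  proof -
    let ?M = "(\<chi> i j. (if idx_pos i = N then v else vs (idx_pos i)) $ j :: real^'m::enum^'m::enum)"
    have oM: "orthogonal_matrix ?M" using frame_mat_orth[OF Forth[OF v(2) v(1)]] by simp
    define z where "z = w - (w \<bullet> v) *\<^sub>R v"
    have "?M *v z = 0"
    proof -
      have "(?M *v z) $ i = 0" for i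
      proof -
        have rowi: "?M $ i = (if idx_pos i = N then v else vs (idx_pos i))" by (simp add: vec_eq_iff)
        have "idx_pos i < CARD('m::enum)" by (rule idx_pos_props(1))
        then have "idx_pos i \<noteq> N \<Longrightarrow> idx_pos i < N" unfolding N_def by linarith
        then show ?thesis unfolding matrix_vector_mul_component rowi z_def
          using v w by (auto simp: inner_diff_right dot_square_norm inner_commute)
      qed
      then show ?thesis by (simp add: vec_eq_iff)
    qed
    then have "transpose ?M *v (?M *v z) = 0" by simp
    then have "z = 0" using oM unfolding orthogonal_matrix_def by (simp add: matrix_vector_mul_assoc)
    then have wz: "w = (w \<bullet> v) *\<^sub>R v" unfolding z_def by simp
    from arg_cong[OF wz, of norm] have "norm w = \<bar>w \<bullet> v\<bar> * norm v" by simp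
    then have "\<bar>w \<bullet> v\<bar> = 1" using v(2) w(2) by simp
    then consider "w \<bullet> v = 1" | "w \<bullet> v = -1" by linarith
    then show ?thesis
    proof cases
      case 1 then show ?thesis using wz by simp
    next
      case 2
      then have "w = - v" using wz by simp
      then have "frame_det (\<lambda>i. if i = N then w else vs i) = -1"
        using frame_det_neg[OF NC, of v vs] v(3) by (simp only:)
      then show ?thesis using w(3) by simp
    qed
  qed
  show ?thesis unfolding N_def[symmetric] using ex un by blast
qed


lemma dual_norm:
  assumes "open I" "sph_unit_speed_curve I (g::real \<Rightarrow> real^'m::enum)" "t \<in> I"
  shows "norm (sph_dual g t) = 1"
proof -
  have "\<exists>!v. (\<forall>i<CARD('m) - 1. sframe g i t \<bullet> v = 0) \<and> norm v = 1 \<and>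
          frame_det (\<lambda>i. if i = CARD('m) - 1 then v else sframe g i t) = 1"
  proof (rule dual_unique)
    fix i j assume "i < CARD('m) - 1" "j < CARD('m) - 1"
    then show "sframe g i t \<bullet> sframe g j t = (if i = j then 1 else 0)"
      by (intro frame_orth[OF assms(1,2) _ _ _ assms(3), of "CARD('m) - 2"]) auto
  qed
  from theI'[OF this] show ?thesis unfolding sph_dual_def by blast
qed

lemma ped_psi:
  fixes P u :: "'a::real_inner"
  assumes "P \<bullet> P = 1"
  shows "inverse (sqrt (1 - (P \<bullet> u)^2)) *\<^sub>R (P - (P \<bullet> u) *\<^sub>R u) =
    inverse (sqrt ((1 + P \<bullet> (P - (2 * (P \<bullet> u)) *\<^sub>R u)) / 2)) *\<^sub>R ((1/2) *\<^sub>R (P + (P - (2 * (P \<bullet> u)) *\<^sub>R u)))"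
proof -
  define a where "a = P \<bullet> u"
  have 1: "(1 + P \<bullet> (P - (2 * a) *\<^sub>R u)) / 2 = 1 - a^2"
    using assms by (simp add: inner_diff_right power2_eq_square a_def)
  have h: "(1/2::real) *\<^sub>R P + (1/2) *\<^sub>R P = P"
  proof -
    have "(1/2::real) *\<^sub>R P + (1/2) *\<^sub>R P = ((1/2) + (1/2)) *\<^sub>R P" by (rule scaleR_left_distrib[symmetric])
    then show ?thesis by simp
  qed
  have 2: "(1/2) *\<^sub>R (P + (P - (2 * a) *\<^sub>R u)) = P - a *\<^sub>R u"
    using h by (simp add: algebra_simps)
  show ?thesis unfolding a_def[symmetric] 1 2 ..
qed

lemma P_ped:
  fixes P u :: "'a::real_inner"
  assumes "P \<bullet> P = 1" "(P \<bullet> u)^2 < 1"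
  shows "P \<bullet> (inverse (sqrt (1 - (P \<bullet> u)^2)) *\<^sub>R (P - (P \<bullet> u) *\<^sub>R u)) = sqrt (1 - (P \<bullet> u)^2)"
proof -
  define a where "a = P \<bullet> u"
  define r where "r = sqrt (1 - a^2)"
  have r: "r > 0" "r^2 = 1 - a^2" using assms(2) by (simp_all add: r_def a_def)
  have "P \<bullet> (P - a *\<^sub>R u) = r^2" using assms(1) r(2) by (simp add: inner_diff_right a_def power2_eq_square)
  then have "P \<bullet> (inverse r *\<^sub>R (P - a *\<^sub>R u)) = r" using r(1) by (simp add: power2_eq_square)
  then show ?thesis by (simp add: r_def a_def)
qed

lemma ort_phi:
  fixes P u :: "'a::real_inner"
  assumes "P \<bullet> P = 1" "(P \<bullet> u)^2 < 1"
  shows "P - (2 * (P \<bullet> u)) *\<^sub>R u = PhiP P (inverse (sqrt (1 - (P \<bullet> u)^2)) *\<^sub>R (P - (P \<bullet> u) *\<^sub>R u))"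
proof -
  define a where "a = P \<bullet> u"
  define r where "r = sqrt (1 - a^2)"
  have r: "r > 0" using assms(2) by (simp add: r_def a_def)
  have Pi: "P \<bullet> (inverse r *\<^sub>R (P - a *\<^sub>R u)) = r" using P_ped[OF assms] by (simp add: r_def a_def)
  have "PhiP P (inverse r *\<^sub>R (P - a *\<^sub>R u)) = (2 * r) *\<^sub>R (inverse r *\<^sub>R (P - a *\<^sub>R u)) - P"
    unfolding PhiP_def Pi ..
  also have "\<dots> = 2 *\<^sub>R (P - a *\<^sub>R u) - P" using r by simp
  also have "\<dots> = P - (2 * a) *\<^sub>R u" by (simp add: algebra_simps scaleR_2)
  finally show ?thesis by (simp add: r_def a_def)
qed

lemma DPhi_inj:
  fixes P x v :: "'a::real_inner"
  assumes "P \<bullet> x > 0" "(2 * (P \<bullet> v)) *\<^sub>R x + (2 * (P \<bullet> x)) *\<^sub>R v = 0"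
  shows "v = 0"
proof -
  have "P \<bullet> ((2 * (P \<bullet> v)) *\<^sub>R x + (2 * (P \<bullet> x)) *\<^sub>R v) = 0" using assms(2) by simp
  then have "4 * ((P \<bullet> x) * (P \<bullet> v)) = 0" by (simp add: inner_add_right algebra_simps)
  then have "P \<bullet> v = 0" using assms(1) by simp
  then have "(2 * (P \<bullet> x)) *\<^sub>R v = 0" using assms(2) by simp
  then show ?thesis using assms(1) by simp
qed

lemma Phi_deriv:
  fixes P x :: "'a::real_inner"
  shows "(PhiP P has_derivative (\<lambda>v. (2 * (P \<bullet> v)) *\<^sub>R x + (2 * (P \<bullet> x)) *\<^sub>R v)) (at x)"
  unfolding PhiP_def
  by (auto intro!: derivative_eq_intros simp: algebra_simps)

lemma not_singular:
  fixes P x :: "'a::euclidean_space"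
  assumes "P \<bullet> x > 0"
  shows "\<not> singular_point (PhiP P) x"
proof -
  define D where "D = (\<lambda>v. (2 * (P \<bullet> v)) *\<^sub>R x + (2 * (P \<bullet> x)) *\<^sub>R v)"
  have dd: "(PhiP P has_derivative D) (at x)" unfolding D_def by (rule Phi_deriv)
  then have fd: "frechet_derivative (PhiP P) (at x) = D" using frechet_derivative_at by metis
  have lin: "linear D" using dd has_derivative_linear by blast
  have "inj D"
  proof (rule injI)
    fix v w assume "D v = D w"
    then have "D (v - w) = 0" using linear_diff[OF lin] by simp
    then have "v - w = 0" using DPhi_inj[OF assms] unfolding D_def by blast
    then show "v = w" by simp
  qed
  then have "surj D" using lin by (simp add: linear_injective_imp_surjective)
  then show ?thesis unfolding singular_point_def fd by simp
qed

lemma vderiv_nondiff: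
  assumes "\<not> f differentiable (at s)" "\<not> h differentiable (at s)"
  shows "vderiv f s = vderiv h s"
proof -
  have "(\<lambda>f'. (f has_vector_derivative f') (at s)) = (\<lambda>f'. (h has_vector_derivative f') (at s))"
    using assms differentiableI_vector by blast
  then show ?thesis unfolding vderiv_def vector_derivative_def by simp
qed

theorem lemma9:
  fixes I :: "real set" and g :: "real \<Rightarrow> real^'m::enum" and P :: "real^'m::enum" and s :: real
  assumes "card (UNIV :: 'm set) \<ge> 3"
    and "open I" and "is_interval I"
    and "sph_unit_speed_curve I g"
    and "norm P = 1"
    and "\<forall>t\<in>I. P \<noteq> sph_dual g t \<and> P \<noteq> - sph_dual g t"
    and "s \<in> I"
  shows "vderiv (sph_orthotomic g P) s = 0 \<longleftrightarrow>
           (vderiv (sph_pedal g P) s = 0 \<or> singular_point (PhiP P) (sph_pedal g P s))"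
proof -
  define ort where "ort = sph_orthotomic g P"
  define ped where "ped = sph_pedal g P"
  have PP: "P \<bullet> P = 1" using assms(5) by (simp add: dot_square_norm)
  have alt: "(P \<bullet> sph_dual g t)^2 < 1" if t: "t \<in> I" for t
  proof -
    have nu: "norm (sph_dual g t) = 1" by (rule dual_norm[OF assms(2,4) t])
    have le: "\<bar>P \<bullet> sph_dual g t\<bar> \<le> 1" using Cauchy_Schwarz_ineq2[of P "sph_dual g t"] nu assms(5) by simp
    have "\<bar>P \<bullet> sph_dual g t\<bar> \<noteq> 1"
    proof
      assume "\<bar>P \<bullet> sph_dual g t\<bar> = 1"
      then have "\<bar>P \<bullet> sph_dual g t\<bar> = norm P * norm (sph_dual g t)" using nu assms(5) by simp
      then have "sph_dual g t = P \<or> sph_dual g t = - P"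
        unfolding norm_cauchy_schwarz_abs_eq using nu assms(5) by simp
      then show False using assms(6) t by auto
    qed
    then have "\<bar>P \<bullet> sph_dual g t\<bar> < 1" using le by simp
    then show ?thesis by (simp add: abs_square_less_1)
  qed
  have eq1: "ped = (\<lambda>y. inverse (sqrt ((1 + P \<bullet> y) / 2)) *\<^sub>R ((1/2) *\<^sub>R (P + y))) \<circ> ort"
    unfolding ped_def ort_def sph_pedal_def sph_orthotomic_def
    by (rule ext) (simp only: comp_apply ped_psi[OF PP])
  have eq2: "ort t = PhiP P (ped t)" if "t \<in> I" for t
    unfolding ped_def ort_def sph_pedal_def sph_orthotomic_def by (rule ort_phi[OF PP alt[OF that]])
  have cpos: "P \<bullet> ped s > 0"
    unfolding ped_def sph_pedal_def P_ped[OF PP alt[OF assms(7)]] using alt[OF assms(7)] by simp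
  have ns: "\<not> singular_point (PhiP P) (ped s)" by (rule not_singular[OF cpos])
  define D where "D = (\<lambda>v. (2 * (P \<bullet> v)) *\<^sub>R ped s + (2 * (P \<bullet> ped s)) *\<^sub>R v)"
  have "vderiv ort s = 0 \<longleftrightarrow> vderiv ped s = 0"
  proof (cases "ped differentiable (at s)")
    case True
    define p' where "p' = vderiv ped s"
    have dp: "(ped has_vector_derivative p') (at s)"
      using True unfolding p'_def vderiv_def by (simp add: vector_derivative_works[symmetric])
    have "((PhiP P \<circ> ped) has_derivative (D \<circ> (\<lambda>t. t *\<^sub>R p'))) (at s)"
      by (rule diff_chain_at[OF dp[unfolded has_vector_derivative_def]]) (unfold D_def, rule Phi_deriv)
    moreover have "D \<circ> (\<lambda>t. t *\<^sub>R p') = (\<lambda>t. t *\<^sub>R D p')"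
      unfolding D_def by (auto simp: algebra_simps)
    ultimately have "((PhiP P \<circ> ped) has_vector_derivative D p') (at s)"
      unfolding has_vector_derivative_def by simp
    then have "(ort has_vector_derivative D p') (at s)"
      by (rule has_vector_derivative_transform_within_open[OF _ assms(2,7)]) (simp add: eq2)
    then have vo: "vderiv ort s = D p'" unfolding vderiv_def by (rule vector_derivative_at)
    have "D p' = 0 \<longleftrightarrow> p' = 0"
    proof
      assume "D p' = 0"
      then show "p' = 0" using DPhi_inj[OF cpos, of p'] unfolding D_def by blast
    next
      assume "p' = 0"
      then show "D p' = 0" unfolding D_def by simp
    qed
    then show ?thesis using vo p'_def by simp
  next
    case False
    have "\<not> ort differentiable (at s)"
    proof
      assume od: "ort differentiable (at s)"
      define q where "q = (\<lambda>y. (1 + P \<bullet> y) / 2)"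
      have q0: "q (ort s) > 0"
      proof -
        have "q (ort s) = 1 - (P \<bullet> sph_dual g s)^2"
          unfolding q_def ort_def sph_orthotomic_def using PP
          by (simp add: inner_diff_right power2_eq_square)
        then show ?thesis using alt[OF assms(7)] by simp
      qed
      have qd: "q differentiable (at (ort s))" unfolding q_def by simp
      have sd: "sqrt differentiable (at (q (ort s)))"
        using DERIV_real_sqrt[OF q0] by (rule differentiableI[OF has_field_derivative_imp_has_derivative])
      have "(\<lambda>y. sqrt (q y)) differentiable (at (ort s))"
        by (rule differentiable_compose[OF sd qd])
      then have "(\<lambda>y. inverse (sqrt (q y))) differentiable (at (ort s))"
        using q0 by (intro differentiable_inverse) auto
      then have "(\<lambda>y. inverse (sqrt (q y)) *\<^sub>R ((1/2) *\<^sub>R (P + y))) differentiable (at (ort s))"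
        by (intro differentiable_scaleR) simp_all
      then have "ped differentiable (at s)"
        unfolding eq1 q_def by (rule differentiable_chain_at[OF od])
      then show False using False by simp
    qed
    then show ?thesis using vderiv_nondiff[OF _ False, of ort] by simp
  qed
  then show ?thesis using ns unfolding ort_def ped_def by simp
qed

end
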